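(* Let $(A,\succ,\prec)$ be an anti-pre-Novikov algebra and $(V,l_{\succ},r_{\succ},l_{\prec},r_{\prec})$ a representation of it. Put $l_{\circ}=l_{\succ}+l_{\prec}$, $r_{\circ}=r_{\succ}+r_{\prec}$, $r_{\odot}=r_{\succ}+l_{\prec}$. Let $\hat A=A\oplus V^*$ with operations $(x+a^* )\succ(y+b^* )=x\succ y-(l_{\circ}^*+r_{\circ}^* )(x)b^*-r_{\succ}^*(y)a^*$ and $(x+a^* )\prec(y+b^* )=x\prec y+r_{\odot}^*(x)b^*+r_{\circ}^*(y)a^*$ ($x,y\in A$, $a^*,b^*\in V^*$); this is the semi-direct product anti-pre-Novikov algebra $A\ltimes V^*$ for the dual representation $(V^*,-(l_{\circ}^*+r_{\circ}^* ),-r_{\succ}^*,r_{\odot}^*,r_{\circ}^* )$. Let $T:V\to A$ be linear, identified with $\sum_{i}T(v_i)\otimes v_i^*\in\hat A\otimes\hat A$ for a basis $\{v_i\}$ of $V$ with dual basis $\{v_i^*\}$. Then $s=T-\tau(T)$ is a (skew-symmetric) solution of the anti-pre-Novikov Yang–Baxter equation in $\hat A$ if and only if $T$ is an $\mathcal O$-operator on $(A,\succ,\prec)$ associated to $(V,l_{\succ},r_{\succ},l_{\prec},r_{\prec})$.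
   Context: An anti-pre-Novikov algebra is $(A,\succ,\prec)$ such that with $x\circ y=x\succ y+x\prec y$: $(x\circ y-y\circ x)\succ z=y\succ(x\succ z)-x\succ(y\succ z)$; $x\prec(y\circ z)=(y\succ x)\prec z-(x\prec y)\prec z-y\succ(x\prec z)$; $(x\circ y)\succ z=-(x\succ z)\prec y$; $(x\prec y)\prec z=(x\prec z)\prec y$; $(x\circ y-y\circ x)\prec z=x\succ(y\circ z)-y\succ(x\circ z)$. A representation of it is $(V,l_{\succ},r_{\succ},l_{\prec},r_{\prec})$ ($V$ finite-dimensional, maps $A\to\mathrm{End}(V)$) such that, with $l_{\circ}=l_{\succ}+l_{\prec}$, $r_{\circ}=r_{\succ}+r_{\prec}$: $l_{\succ}(x\circ y-y\circ x)=l_{\succ}(y)l_{\succ}(x)-l_{\succ}(x)l_{\succ}(y)$; $r_{\prec}(x\circ y)=r_{\prec}(y)l_{\succ}(x)-r_{\prec}(y)r_{\prec}(x)-l_{\succ}(x)r_{\prec}(y)$; $l_{\succ}(x\circ y)=-r_{\prec}(y)l_{\succ}(x)$; $l_{\prec}(x\prec y)=r_{\prec}(y)l_{\prec}(x)$; $l_{\prec}(x\circ y-y\circ x)=l_{\succ}(x)l_{\circ}(y)-l_{\succ}(y)l_{\circ}(x)$; $r_{\succ}(x)(l_{\circ}(y)-r_{\circ}(y))=r_{\succ}(y\succ x)-l_{\succ}(y)r_{\succ}(x)$; $l_{\prec}(x)l_{\circ}(y)=l_{\prec}(y\succ x)-l_{\prec}(x\prec y)-l_{\succ}(y)l_{\prec}(x)$;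 $r_{\prec}(x)(l_{\circ}(y)-r_{\circ}(y))=l_{\succ}(y)r_{\circ}(x)-r_{\succ}(y\circ x)$; $r_{\succ}(x)l_{\circ}(y)=-l_{\prec}(y\succ x)$; $r_{\prec}(x)r_{\prec}(y)=r_{\prec}(y)r_{\prec}(x)$; $l_{\prec}(x)r_{\circ}(y)=r_{\prec}(y)r_{\succ}(x)-r_{\prec}(y)l_{\prec}(x)-r_{\succ}(x\prec y)$; $r_{\succ}(x)r_{\circ}(y)=-r_{\prec}(y)r_{\succ}(x)$. For $f:A\to\mathrm{End}(V)$, $\langle f^*(x)u^*,v\rangle=-\langle u^*,f(x)v\rangle$. $\tau$ is the flip of tensor factors. An $\mathcal O$-operator on $(A,\succ,\prec)$ associated to $(V,l_{\succ},r_{\succ},l_{\prec},r_{\prec})$ is a linear $T:V\to A$ with $T(u)\succ T(v)=T(l_{\succ}(T(u))v+r_{\succ}(T(v))u)$ and $T(u)\prec T(v)=T(l_{\prec}(T(u))v+r_{\prec}(T(v))u)$. For an anti-pre-Novikov algebra $B$ with $x\odot y=x\succ y+y\prec x$, $s=\sum_i a_i\otimes b_i\in B\otimes B$ solves the anti-pre-Novikov Yang–Baxter equation if $\sum_{i,j}a_i\circ a_j\otimes b_i\otimes b_j+\sum_{i,j}a_j\otimes a_i\otimes(b_i\odot b_j)+\sum_{i,j}a_i\otimes(b_i\prec a_j)\otimes b_j=0$. *)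

theory Defs
  imports Complex_Main "HOL-Library.Function_Algebras"
begin

definition bilin_op :: "('k::field \<Rightarrow> 'a::ab_group_add \<Rightarrow> 'a) \<Rightarrow> ('a \<Rightarrow> 'a \<Rightarrow> 'a) \<Rightarrow> bool" where
  "bilin_op sA m \<longleftrightarrow> (\<forall>x. Vector_Spaces.linear sA sA (m x)) \<and> (\<forall>y. Vector_Spaces.linear sA sA (\<lambda>x. m x y))"

definition anti_pre_Novikov ::
  "('k::field \<Rightarrow> 'a::ab_group_add \<Rightarrow> 'a) \<Rightarrow> ('a \<Rightarrow> 'a \<Rightarrow> 'a) \<Rightarrow> ('a \<Rightarrow> 'a \<Rightarrow> 'a) \<Rightarrow> bool" where
  "anti_pre_Novikov sA s p \<longleftrightarrow> vector_space sA \<and> bilin_op sA s \<and> bilin_op sA p \<and>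
   (let c = (\<lambda>x y. s x y + p x y) in
    (\<forall>x y z. s (c x y - c y x) z = s y (s x z) - s x (s y z)) \<and>
    (\<forall>x y z. p x (c y z) = p (s y x) z - p (p x y) z - s y (p x z)) \<and>
    (\<forall>x y z. s (c x y) z = - p (s x z) y) \<and>
    (\<forall>x y z. p (p x y) z = p (p x z) y) \<and>
    (\<forall>x y z. p (c x y - c y x) z = s x (c y z) - s y (c x z)))"

definition lin_rep_map ::
  "('k::field \<Rightarrow> 'a::ab_group_add \<Rightarrow> 'a) \<Rightarrow> ('k \<Rightarrow> 'v::ab_group_add \<Rightarrow> 'v) \<Rightarrow> ('a \<Rightarrow> 'v \<Rightarrow> 'v) \<Rightarrow> bool" where
  "lin_rep_map sA sV f \<longleftrightarrow> (\<forall>x. Vector_Spaces.linear sV sV (f x)) \<and> (\<forall>v. Vector_Spaces.linear sA sV (\<lambda>x. f x v))"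

text \<open>Representation (V, l1, r1, l2, r2) = (V, l_succ, r_succ, l_prec, r_prec), V finite-dimensional.\<close>
definition apN_rep ::
  "('k::field \<Rightarrow> 'a::ab_group_add \<Rightarrow> 'a) \<Rightarrow> ('a \<Rightarrow> 'a \<Rightarrow> 'a) \<Rightarrow> ('a \<Rightarrow> 'a \<Rightarrow> 'a) \<Rightarrow>
   ('k \<Rightarrow> 'v::ab_group_add \<Rightarrow> 'v) \<Rightarrow> 'v set \<Rightarrow>
   ('a \<Rightarrow> 'v \<Rightarrow> 'v) \<Rightarrow> ('a \<Rightarrow> 'v \<Rightarrow> 'v) \<Rightarrow> ('a \<Rightarrow> 'v \<Rightarrow> 'v) \<Rightarrow> ('a \<Rightarrow> 'v \<Rightarrow> 'v) \<Rightarrow> bool" where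
  "apN_rep sA s p sV B l1 r1 l2 r2 \<longleftrightarrow>
   finite_dimensional_vector_space sV B \<and>
   lin_rep_map sA sV l1 \<and> lin_rep_map sA sV r1 \<and> lin_rep_map sA sV l2 \<and> lin_rep_map sA sV r2 \<and>
   (let c = (\<lambda>x y. s x y + p x y); lc = (\<lambda>x. l1 x + l2 x); rc = (\<lambda>x. r1 x + r2 x) in
    (\<forall>x y. l1 (c x y - c y x) = l1 y \<circ> l1 x - l1 x \<circ> l1 y) \<and>
    (\<forall>x y. r2 (c x y) = r2 y \<circ> l1 x - r2 y \<circ> r2 x - l1 x \<circ> r2 y) \<and>
    (\<forall>x y. l1 (c x y) = - (r2 y \<circ> l1 x)) \<and>
    (\<forall>x y. l2 (p x y) = r2 y \<circ> l2 x) \<and>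
    (\<forall>x y. l2 (c x y - c y x) = l1 x \<circ> lc y - l1 y \<circ> lc x) \<and>
    (\<forall>x y. r1 x \<circ> (lc y - rc y) = r1 (s y x) - l1 y \<circ> r1 x) \<and>
    (\<forall>x y. l2 x \<circ> lc y = l2 (s y x) - l2 (p x y) - l1 y \<circ> l2 x) \<and>
    (\<forall>x y. r2 x \<circ> (lc y - rc y) = l1 y \<circ> rc x - r1 (c y x)) \<and>
    (\<forall>x y. r1 x \<circ> lc y = - l2 (s y x)) \<and>
    (\<forall>x y. r2 x \<circ> r2 y = r2 y \<circ> r2 x) \<and>
    (\<forall>x y. l2 x \<circ> rc y = r2 y \<circ> r1 x - r2 y \<circ> l2 x - r1 (p x y)) \<and>
    (\<forall>x y. r1 x \<circ> rc y = - (r2 y \<circ> r1 x)))"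

definition O_operator ::
  "('a \<Rightarrow> 'a \<Rightarrow> 'a::ab_group_add) \<Rightarrow> ('a \<Rightarrow> 'a \<Rightarrow> 'a) \<Rightarrow>
   ('a \<Rightarrow> 'v::ab_group_add \<Rightarrow> 'v) \<Rightarrow> ('a \<Rightarrow> 'v \<Rightarrow> 'v) \<Rightarrow> ('a \<Rightarrow> 'v \<Rightarrow> 'v) \<Rightarrow> ('a \<Rightarrow> 'v \<Rightarrow> 'v) \<Rightarrow>
   ('v \<Rightarrow> 'a) \<Rightarrow> bool" where
  "O_operator s p l1 r1 l2 r2 T \<longleftrightarrow>
   (\<forall>u v. s (T u) (T v) = T (l1 (T u) v + r1 (T v) u)) \<and>
   (\<forall>u v. p (T u) (T v) = T (l2 (T u) v + r2 (T v) u))"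

text \<open>Dual map: V* is modelled as functions 'v \<Rightarrow> 'k (linear ones);
  <f*(x) u*, v> = - <u*, f(x) v>.\<close>
definition dual_map :: "('a \<Rightarrow> 'v \<Rightarrow> 'v) \<Rightarrow> 'a \<Rightarrow> ('v \<Rightarrow> 'k::field) \<Rightarrow> ('v \<Rightarrow> 'k)" where
  "dual_map f x u = (\<lambda>v. - u (f x v))"

definition hat_succ ::
  "('a \<Rightarrow> 'a \<Rightarrow> 'a::ab_group_add) \<Rightarrow> ('a \<Rightarrow> 'a \<Rightarrow> 'a) \<Rightarrow>
   ('a \<Rightarrow> 'v::ab_group_add \<Rightarrow> 'v) \<Rightarrow> ('a \<Rightarrow> 'v \<Rightarrow> 'v) \<Rightarrow> ('a \<Rightarrow> 'v \<Rightarrow> 'v) \<Rightarrow> ('a \<Rightarrow> 'v \<Rightarrow> 'v) \<Rightarrow>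
   'a \<times> ('v \<Rightarrow> 'k::field) \<Rightarrow> 'a \<times> ('v \<Rightarrow> 'k) \<Rightarrow> 'a \<times> ('v \<Rightarrow> 'k)" where
  "hat_succ s p l1 r1 l2 r2 X Y =
    (case X of (x, a) \<Rightarrow> case Y of (y, b) \<Rightarrow>
      (s x y,
       - dual_map (\<lambda>z. (l1 z + l2 z) + (r1 z + r2 z)) x b - dual_map r1 y a))"

definition hat_prec ::
  "('a \<Rightarrow> 'a \<Rightarrow> 'a::ab_group_add) \<Rightarrow> ('a \<Rightarrow> 'a \<Rightarrow> 'a) \<Rightarrow>
   ('a \<Rightarrow> 'v::ab_group_add \<Rightarrow> 'v) \<Rightarrow> ('a \<Rightarrow> 'v \<Rightarrow> 'v) \<Rightarrow> ('a \<Rightarrow> 'v \<Rightarrow> 'v) \<Rightarrow> ('a \<Rightarrow> 'v \<Rightarrow> 'v) \<Rightarrow>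
   'a \<times> ('v \<Rightarrow> 'k::field) \<Rightarrow> 'a \<times> ('v \<Rightarrow> 'k) \<Rightarrow> 'a \<times> ('v \<Rightarrow> 'k)" where
  "hat_prec s p l1 r1 l2 r2 X Y =
    (case X of (x, a) \<Rightarrow> case Y of (y, b) \<Rightarrow>
      (p x y,
       dual_map (\<lambda>z. r1 z + l2 z) x b + dual_map (\<lambda>z. r1 z + r2 z) y a))"

definition hat_add :: "'a::ab_group_add \<times> ('v \<Rightarrow> 'k::field) \<Rightarrow> 'a \<times> ('v \<Rightarrow> 'k) \<Rightarrow> 'a \<times> ('v \<Rightarrow> 'k)" where
  "hat_add X Y = (fst X + fst Y, snd X + snd Y)"

definition hat_functional ::
  "('k::field \<Rightarrow> 'a::ab_group_add \<Rightarrow> 'a) \<Rightarrow> ('k \<Rightarrow> 'v::ab_group_add \<Rightarrow> 'v) \<Rightarrow>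
   ('a \<times> ('v \<Rightarrow> 'k) \<Rightarrow> 'k) \<Rightarrow> bool" where
  "hat_functional sA sV F \<longleftrightarrow>
   (\<forall>x y a b. Vector_Spaces.linear sV (*) a \<longrightarrow> Vector_Spaces.linear sV (*) b \<longrightarrow>
      F (x + y, a + b) = F (x, a) + F (y, b)) \<and>
   (\<forall>c x a. Vector_Spaces.linear sV (*) a \<longrightarrow> F (sA c x, \<lambda>v. c * a v) = c * F (x, a))"

text \<open>The element  \<Sum>i a_i\<otimes>b_i  (finite index set I) of hat A \<otimes> hat A solves the
  anti-pre-Novikov Yang-Baxter equation in (hat A, hs, hp). The vanishing of the element of
  hat A \<otimes> hat A \<otimes> hat A is expressed by the vanishing of all its pairings with
  F \<otimes> G \<otimes> H for linear functionals F, G, H on hat A.\<close>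
definition hat_APN_YBE ::
  "('k::field \<Rightarrow> 'a::ab_group_add \<Rightarrow> 'a) \<Rightarrow> ('k \<Rightarrow> 'v::ab_group_add \<Rightarrow> 'v) \<Rightarrow>
   ('a \<times> ('v \<Rightarrow> 'k) \<Rightarrow> 'a \<times> ('v \<Rightarrow> 'k) \<Rightarrow> 'a \<times> ('v \<Rightarrow> 'k)) \<Rightarrow>
   ('a \<times> ('v \<Rightarrow> 'k) \<Rightarrow> 'a \<times> ('v \<Rightarrow> 'k) \<Rightarrow> 'a \<times> ('v \<Rightarrow> 'k)) \<Rightarrow>
   'i set \<Rightarrow> ('i \<Rightarrow> 'a \<times> ('v \<Rightarrow> 'k)) \<Rightarrow> ('i \<Rightarrow> 'a \<times> ('v \<Rightarrow> 'k)) \<Rightarrow> bool" where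
  "hat_APN_YBE sA sV hs hp I a b \<longleftrightarrow>
   (\<forall>F G H. hat_functional sA sV F \<longrightarrow> hat_functional sA sV G \<longrightarrow> hat_functional sA sV H \<longrightarrow>
     (\<Sum>i\<in>I. \<Sum>j\<in>I.
        F (hat_add (hs (a i) (a j)) (hp (a i) (a j))) * G (b i) * H (b j)
      + F (a j) * G (a i) * H (hat_add (hs (b i) (b j)) (hp (b j) (b i)))
      + F (a i) * G (hp (b i) (a j)) * H (b j)) = 0)"

definition dual_basis_vec :: "('k::field \<Rightarrow> 'v::ab_group_add \<Rightarrow> 'v) \<Rightarrow> 'v set \<Rightarrow> 'v \<Rightarrow> ('v \<Rightarrow> 'k)" where
  "dual_basis_vec sV B v = (\<lambda>w. module.representation sV B w v)"

text \<open>s = T - \<tau>(T) = \<Sum>_{v\<in>B} (T v \<otimes> v* - v* \<otimes> T v), indexed by B \<times> bool.\<close>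
definition sT_left :: "('k::field \<Rightarrow> 'v::ab_group_add \<Rightarrow> 'v) \<Rightarrow> 'v set \<Rightarrow> ('v \<Rightarrow> 'a::ab_group_add) \<Rightarrow>
   'v \<times> bool \<Rightarrow> 'a \<times> ('v \<Rightarrow> 'k)" where
  "sT_left sV B T i = (if snd i then (T (fst i), 0) else (0, - dual_basis_vec sV B (fst i)))"

definition sT_right :: "('k::field \<Rightarrow> 'v::ab_group_add \<Rightarrow> 'v) \<Rightarrow> 'v set \<Rightarrow> ('v \<Rightarrow> 'a::ab_group_add) \<Rightarrow>
   'v \<times> bool \<Rightarrow> 'a \<times> ('v \<Rightarrow> 'k)" where
  "sT_right sV B T i = (if snd i then (0, dual_basis_vec sV B (fst i)) else (T (fst i), 0))"

end

theory Submission
  imports Defs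
begin


locale apn_ctx = A: vector_space sA + V: finite_dimensional_vector_space sV B
  for sA :: "'k::field \<Rightarrow> 'a::ab_group_add \<Rightarrow> 'a" and sV :: "'k \<Rightarrow> 'v::ab_group_add \<Rightarrow> 'v"
  and B :: "'v set" +
  fixes s p :: "'a \<Rightarrow> 'a \<Rightarrow> 'a" and l1 r1 l2 r2 :: "'a \<Rightarrow> 'v \<Rightarrow> 'v" and T :: "'v \<Rightarrow> 'a"
  assumes s_add1: "s (x + y) z = s x z + s y z" and s_add2: "s x (y + z) = s x y + s x z"
  and s_sc1: "s (sA c x) y = sA c (s x y)" and s_sc2: "s x (sA c y) = sA c (s x y)"
  and p_add1: "p (x + y) z = p x z + p y z" and p_add2: "p x (y + z) = p x y + p x z"
  and p_sc1: "p (sA c x) y = sA c (p x y)" and p_sc2: "p x (sA c y) = sA c (p x y)"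
  and T_add: "T (v + w) = T v + T w" and T_sc: "T (sV c v) = sA c (T v)"
  and l1_add1: "l1 (x + y) v = l1 x v + l1 y v" and l1_add2: "l1 x (v + w) = l1 x v + l1 x w"
  and l1_sc1: "l1 (sA c x) v = sV c (l1 x v)" and l1_sc2: "l1 x (sV c v) = sV c (l1 x v)"
  and r1_add1: "r1 (x + y) v = r1 x v + r1 y v" and r1_add2: "r1 x (v + w) = r1 x v + r1 x w"
  and r1_sc1: "r1 (sA c x) v = sV c (r1 x v)" and r1_sc2: "r1 x (sV c v) = sV c (r1 x v)"
  and l2_add1: "l2 (x + y) v = l2 x v + l2 y v" and l2_add2: "l2 x (v + w) = l2 x v + l2 x w"
  and l2_sc1: "l2 (sA c x) v = sV c (l2 x v)" and l2_sc2: "l2 x (sV c v) = sV c (l2 x v)"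
  and r2_add1: "r2 (x + y) v = r2 x v + r2 y v" and r2_add2: "r2 x (v + w) = r2 x v + r2 x w"
  and r2_sc1: "r2 (sA c x) v = sV c (r2 x v)" and r2_sc2: "r2 x (sV c v) = sV c (r2 x v)"
begin

lemmas basic = s_add1 s_add2 s_sc1 s_sc2 p_add1 p_add2 p_sc1 p_sc2 T_add T_sc
  l1_add1 l1_add2 l1_sc1 l1_sc2 r1_add1 r1_add2 r1_sc1 r1_sc2
  l2_add1 l2_add2 l2_sc1 l2_sc2 r2_add1 r2_add2 r2_sc1 r2_sc2

lemma zeros[simp]: "s 0 y = 0" "s x 0 = 0" "p 0 y = 0" "p x 0 = 0" "T 0 = 0"
  "l1 0 v = 0" "l1 x 0 = 0" "r1 0 v = 0" "r1 x 0 = 0"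
  "l2 0 v = 0" "l2 x 0 = 0" "r2 0 v = 0" "r2 x 0 = 0"
  using s_add1[of 0 0] s_add2[of _ 0 0] p_add1[of 0 0] p_add2[of _ 0 0] T_add[of 0 0]
    l1_add1[of 0 0] l1_add2[of _ 0 0] r1_add1[of 0 0] r1_add2[of _ 0 0]
    l2_add1[of 0 0] l2_add2[of _ 0 0] r2_add1[of 0 0] r2_add2[of _ 0 0] by auto

definition R :: "'v \<Rightarrow> 'v \<Rightarrow> 'k" where "R b w = dual_basis_vec sV B b w"

lemma R_add[simp]: "R b (v + w) = R b v + R b w"
  unfolding R_def dual_basis_vec_def
  using V.representation_add[OF V.independent_Basis] V.span_Basis by auto

lemma R_sc[simp]: "R b (sV c v) = c * R b v"
  unfolding R_def dual_basis_vec_def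
  using V.representation_scale[OF V.independent_Basis] V.span_Basis by auto

lemma R_0[simp]: "R b 0 = 0"
  unfolding R_def dual_basis_vec_def by (simp add: V.representation_zero)

lemma R_neg[simp]: "R b (- v) = - R b v"
  by (metis R_0 R_add add_eq_0_iff2 neg_eq_iff_add_eq_0)

definition lin :: "('v \<Rightarrow> 'k) \<Rightarrow> bool" where
  "lin a \<longleftrightarrow> (\<forall>x y. a (x + y) = a x + a y) \<and> (\<forall>c x. a (sV c x) = c * a x)"

lemma lin_sum_apply:
  assumes "lin \<phi>" "finite X" shows "\<phi> (\<Sum>b\<in>X. sV (k b) b) = (\<Sum>b\<in>X. k b * \<phi> b)"
  using assms(2)
proof (induction X rule: finite_induct)
  case empty
  have "\<phi> (sV 0 0) = 0 * \<phi> 0" using assms unfolding lin_def by blast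
  then show ?case by simp
next
  case (insert x F)
  then show ?case using assms unfolding lin_def by simp
qed

lemma collapse:
  assumes "lin \<phi>" shows "(\<Sum>b\<in>B. R b w * \<phi> b) = \<phi> w"
proof -
  have e: "(\<Sum>b\<in>B. sV (R b w) b) = w"
    unfolding R_def dual_basis_vec_def
    by (rule V.sum_representation_eq) (auto simp: V.independent_Basis V.span_Basis V.finite_Basis)
  show ?thesis using lin_sum_apply[OF assms V.finite_Basis, of "\<lambda>b. R b w"] e by simp
qed


lemma vs_k: "vector_space ((*) :: 'k \<Rightarrow> 'k \<Rightarrow> 'k)"
  by unfold_locales (auto simp: algebra_simps)

lemma lin_linear: "lin a \<Longrightarrow> Vector_Spaces.linear sV (*) a"
  unfolding Vector_Spaces.linear_iff lin_def using vs_k V.vector_space_axioms by auto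

lemma lin_R[simp]: "lin (R b)" unfolding lin_def by simp

lemma lin_0[simp]: "lin 0" unfolding lin_def by simp
lemma lin_0'[simp]: "lin (\<lambda>v. 0)" unfolding lin_def by simp
lemma lin_plus[simp]: "lin a \<Longrightarrow> lin b \<Longrightarrow> lin (a + b)" unfolding lin_def by (simp add: algebra_simps)
lemma lin_minus[simp]: "lin a \<Longrightarrow> lin b \<Longrightarrow> lin (a - b)" unfolding lin_def by (simp add: algebra_simps)
lemma lin_uminus[simp]: "lin a \<Longrightarrow> lin (- a)" unfolding lin_def by (simp add: algebra_simps)

lemma lin_sumc: "lin (\<lambda>v. \<Sum>b\<in>X. c b * R b v)"
  unfolding lin_def by (simp add: algebra_simps sum.distrib sum_distrib_left)

lemma dbv: "dual_basis_vec sV B b = R b" by (simp add: R_def fun_eq_iff)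

definition uF :: "('a \<times> ('v \<Rightarrow> 'k) \<Rightarrow> 'k) \<Rightarrow> 'v" where
  "uF F = (\<Sum>b\<in>B. sV (F (0, R b)) b)"

lemma F_eval:
  assumes F: "hat_functional sA sV F" and a: "lin a"
  shows "F (x, a) = F (x, 0) + a (uF F)"
proof -
  have add: "\<And>x y a b. lin a \<Longrightarrow> lin b \<Longrightarrow> F (x + y, a + b) = F (x, a) + F (y, b)"
    using F lin_linear unfolding hat_functional_def by blast
  have sc: "\<And>c x a. lin a \<Longrightarrow> F (sA c x, \<lambda>v. c * a v) = c * F (x, a)"
    using F lin_linear unfolding hat_functional_def by blast
  have 1: "F (x, a) = F (x, 0) + F (0, a)" using add[of 0 a x 0] a by simp
  have z: "F (0, \<lambda>v. 0) = 0" using sc[of 0 0 0] by simp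
  have ind: "F (0, \<lambda>v. \<Sum>b\<in>X. c b * R b v) = (\<Sum>b\<in>X. c b * F (0, R b))" if "finite X" for X c
    using that
  proof (induction X rule: finite_induct)
    case empty
    then show ?case using z by simp
  next
    case (insert x X)
    have "F (0, \<lambda>v. \<Sum>b\<in>insert x X. c b * R b v) = F (0 + 0, (\<lambda>v. c x * R x v) + (\<lambda>v. \<Sum>b\<in>X. c b * R b v))"
      using insert by (simp add: plus_fun_def)
    also have "\<dots> = F (0, \<lambda>v. c x * R x v) + F (0, \<lambda>v. \<Sum>b\<in>X. c b * R b v)"
      by (rule add) (auto simp: lin_def algebra_simps sum.distrib sum_distrib_left)
    also have "F (0, \<lambda>v. c x * R x v) = c x * F (0, R x)"
      using sc[of "R x" "c x" 0] by simp
    finally show ?case using insert by simp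
  qed
  have ae: "a = (\<lambda>v. \<Sum>b\<in>B. a b * R b v)"
    using collapse[OF a] by (auto simp: fun_eq_iff mult.commute)
  have "F (0, a) = (\<Sum>b\<in>B. a b * F (0, R b))"
    by (subst ae) (rule ind[OF V.finite_Basis])
  also have "\<dots> = a (uF F)"
    unfolding uF_def by (simp add: lin_sum_apply[OF a V.finite_Basis] mult.commute)
  finally show ?thesis using 1 by simp
qed


abbreviation "hs \<equiv> hat_succ s p l1 r1 l2 r2"
abbreviation "hp \<equiv> hat_prec s p l1 r1 l2 r2"

lemma lin_snd_hs[simp]: "lin (snd X) \<Longrightarrow> lin (snd Y) \<Longrightarrow> lin (snd (hs X Y :: 'a \<times> ('v \<Rightarrow> 'k)))"
  by (cases X; cases Y) (simp add: hat_succ_def dual_map_def lin_def basic algebra_simps)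

lemma lin_snd_hp[simp]: "lin (snd X) \<Longrightarrow> lin (snd Y) \<Longrightarrow> lin (snd (hp X Y :: 'a \<times> ('v \<Rightarrow> 'k)))"
  by (cases X; cases Y) (simp add: hat_prec_def dual_map_def lin_def basic algebra_simps)

lemma lin_snd_add[simp]: "lin (snd X) \<Longrightarrow> lin (snd Y) \<Longrightarrow> lin (snd (hat_add X Y :: 'a \<times> ('v \<Rightarrow> 'k)))"
  by (simp add: hat_add_def)

definition fF :: "('a \<times> ('v \<Rightarrow> 'k) \<Rightarrow> 'k) \<Rightarrow> 'a \<Rightarrow> 'k" where "fF F x = F (x, 0)"

lemma F_eval':
  assumes "hat_functional sA sV F" "lin (snd X)"
  shows "F X = fF F (fst X) + snd X (uF F)"
  using F_eval[OF assms(1), of "snd X" "fst X"] assms(2) by (simp add: fF_def)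

lemma fF_add:
  assumes "hat_functional sA sV F" shows "fF F (x + y) = fF F x + fF F y"
  using assms lin_linear[OF lin_0] unfolding hat_functional_def fF_def
  by (metis add.right_neutral)

lemma fF_sc:
  assumes "hat_functional sA sV F" shows "fF F (sA c x) = c * fF F x"
proof -
  have "(\<lambda>v. c * (0::'v\<Rightarrow>'k) v) = 0" by (simp add: fun_eq_iff)
  then show ?thesis
  using assms lin_linear[OF lin_0] unfolding hat_functional_def fF_def
  by metis
qed


end

context apn_ctx begin
lemma summand:
  assumes F: "hat_functional sA sV F" and G: "hat_functional sA sV G" and H: "hat_functional sA sV H"
  shows "F (hat_add (hs (sT_left sV B T (vi,bi)) (sT_left sV B T (vj,bj))) (hp (sT_left sV B T (vi,bi)) (sT_left sV B T (vj,bj)))) * G (sT_right sV B T (vi,bi)) * H (sT_right sV B T (vj,bj))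
     + F (sT_left sV B T (vj,bj)) * G (sT_left sV B T (vi,bi)) * H (hat_add (hs (sT_right sV B T (vi,bi)) (sT_right sV B T (vj,bj))) (hp (sT_right sV B T (vj,bj)) (sT_right sV B T (vi,bi))))
     + F (sT_left sV B T (vi,bi)) * G (hp (sT_right sV B T (vi,bi)) (sT_left sV B T (vj,bj))) * H (sT_right sV B T (vj,bj))
   = (let f = fF F; g = fF G; h = fF H; u = uF F; w = uF G; z = uF H in
     (if bi then if bj then
        R vi w * (R vj z * f (s (T vi) (T vj) + p (T vi) (T vj))) + R vj z * (R vi (r1 (T vj) w + r2 (T vj) w) * (- f (T vi)))
      else
        R vi w * (R vj (l1 (T vi) u + r2 (T vi) u) * (- h (T vj))) + R vj u * (R vi (l2 (T vj) z) * g (T vi))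
     else if bj then
        R vj z * (R vi (r2 (T vj) u) * g (T vi)) + R vi w * (R vj (l1 (T vi) z + l2 (T vi) z) * (- f (T vj))) + R vi u * (R vj z * (- g (p (T vi) (T vj))))
      else
        R vi w * (R vj u * h (s (T vi) (T vj) + p (T vj) (T vi))) + R vi u * (R vj (r1 (T vi) w + l2 (T vi) w) * (- h (T vj)))))"
proof -
  have fz: "fF K 0 = 0" if "hat_functional sA sV K" for K
    using fF_sc[OF that, of 0 0] by simp
  show ?thesis
  apply (cases bi; cases bj)
  apply (simp_all add: sT_left_def sT_right_def dbv F_eval'[OF F] F_eval'[OF G] F_eval'[OF H])
  apply (simp_all add: hat_succ_def hat_prec_def hat_add_def dual_map_def basic fz F G H fF_add Let_def)
  apply (simp_all add: algebra_simps)
  done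
qed

lemma sum_BxU: "(\<Sum>i\<in>B \<times> UNIV. \<phi> i) = (\<Sum>v\<in>B. \<phi> (v, True) + \<phi> (v, False))"
proof -
  have "(\<Sum>i\<in>B \<times> UNIV. \<phi> i) = (\<Sum>v\<in>B. \<Sum>t\<in>UNIV. \<phi> (v, t))"
    using sum.cartesian_product[of "\<lambda>x y. \<phi> (x,y)" UNIV B] by simp
  also have "\<dots> = (\<Sum>v\<in>B. \<phi> (v, True) + \<phi> (v, False))"
    by (simp add: UNIV_bool add.commute)
  finally show ?thesis .
qed

lemma dc1:
  assumes "\<And>y. lin (\<lambda>x. \<Phi> x y)" "\<And>x. lin (\<lambda>y. \<Phi> x y)"
  shows "(\<Sum>i\<in>B. \<Sum>j\<in>B. R i w * (R j z * \<Phi> i j)) = \<Phi> w z"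
proof -
  have "(\<Sum>i\<in>B. \<Sum>j\<in>B. R i w * (R j z * \<Phi> i j)) = (\<Sum>i\<in>B. R i w * \<Phi> i z)"
    by (simp add: sum_distrib_left[symmetric] collapse[OF assms(2)])
  also have "\<dots> = \<Phi> w z" by (rule collapse[OF assms(1)])
  finally show ?thesis .
qed

lemma dc2:
  assumes "lin \<phi>" "lin (\<lambda>x. \<phi> (X x))"
  shows "(\<Sum>i\<in>B. \<Sum>j\<in>B. R i w * (R j (X i) * \<phi> j)) = \<phi> (X w)"
proof -
  have "(\<Sum>i\<in>B. \<Sum>j\<in>B. R i w * (R j (X i) * \<phi> j)) = (\<Sum>i\<in>B. R i w * \<phi> (X i))"
    by (simp add: sum_distrib_left[symmetric] collapse[OF assms(1)])
  also have "\<dots> = \<phi> (X w)" by (rule collapse[OF assms(2)])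
  finally show ?thesis .
qed

lemma dc3:
  assumes "lin \<phi>" "lin (\<lambda>y. \<phi> (Y y))"
  shows "(\<Sum>i\<in>B. \<Sum>j\<in>B. R j z * (R i (Y j) * \<phi> i)) = \<phi> (Y z)"
proof -
  have "(\<Sum>i\<in>B. \<Sum>j\<in>B. R j z * (R i (Y j) * \<phi> i)) = (\<Sum>j\<in>B. \<Sum>i\<in>B. R j z * (R i (Y j) * \<phi> i))"
    by (rule sum.swap)
  also have "\<dots> = (\<Sum>j\<in>B. R j z * \<phi> (Y j))"
    by (simp add: sum_distrib_left[symmetric] collapse[OF assms(1)])
  also have "\<dots> = \<phi> (Y z)" by (rule collapse[OF assms(2)])
  finally show ?thesis .
qed

definition Ds :: "'v \<Rightarrow> 'v \<Rightarrow> 'a" where "Ds u v = s (T u) (T v) - T (l1 (T u) v + r1 (T v) u)"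
definition Dp :: "'v \<Rightarrow> 'v \<Rightarrow> 'a" where "Dp u v = p (T u) (T v) - T (l2 (T u) v + r2 (T v) u)"

lemma fF_diff: "hat_functional sA sV F \<Longrightarrow> fF F (x - y) = fF F x - fF F y"
  by (metis add_diff_cancel_right' diff_add_cancel fF_add)

lemma T_diff: "T (x - y) = T x - T y"
  by (metis add_diff_cancel_right' diff_add_cancel T_add)

lemma total:
  assumes F: "hat_functional sA sV F" and G: "hat_functional sA sV G" and H: "hat_functional sA sV H"
  shows "(\<Sum>i\<in>B \<times> UNIV. \<Sum>j\<in>B \<times> UNIV.
     F (hat_add (hs (sT_left sV B T i) (sT_left sV B T j)) (hp (sT_left sV B T i) (sT_left sV B T j))) * G (sT_right sV B T i) * H (sT_right sV B T j)
     + F (sT_left sV B T j) * G (sT_left sV B T i) * H (hat_add (hs (sT_right sV B T i) (sT_right sV B T j)) (hp (sT_right sV B T j) (sT_right sV B T i)))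
     + F (sT_left sV B T i) * G (hp (sT_right sV B T i) (sT_left sV B T j)) * H (sT_right sV B T j))
   = fF F (Ds (uF G) (uF H) + Dp (uF G) (uF H)) - fF G (Dp (uF F) (uF H))
     + fF H (Ds (uF G) (uF F) + Dp (uF F) (uF G))"
  (is "?L = ?R")
proof -
  define f where "f = fF F"
  define g where "g = fF G"
  define h where "h = fF H"
  define u where "u = uF F"
  define w where "w = uF G"
  define z where "z = uF H"
  note fl = fF_add[OF F] fF_add[OF G] fF_add[OF H] fF_sc[OF F] fF_sc[OF G] fF_sc[OF H]
  have c1: "(\<Sum>i\<in>B. \<Sum>j\<in>B. R i w * (R j z * f (s (T i) (T j) + p (T i) (T j)))) = f (s (T w) (T z) + p (T w) (T z))"
    by (rule dc1[where \<Phi>="\<lambda>x y. f (s (T x) (T y) + p (T x) (T y))"]) (unfold lin_def f_def; simp add: basic fl algebra_simps)+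
  have c7: "(\<Sum>i\<in>B. \<Sum>j\<in>B. R j z * (R i (r1 (T j) w + r2 (T j) w) * - f (T i))) = - f (T (r1 (T z) w + r2 (T z) w))"
    by (rule dc3[where \<phi>="\<lambda>x. - f (T x)" and Y="\<lambda>y. r1 (T y) w + r2 (T y) w"]) (unfold lin_def f_def; simp add: basic fl algebra_simps)+
  have c2: "(\<Sum>i\<in>B. \<Sum>j\<in>B. R i w * (R j (l1 (T i) u + r2 (T i) u) * - h (T j))) = - h (T (l1 (T w) u + r2 (T w) u))"
    by (rule dc2[where \<phi>="\<lambda>x. - h (T x)" and X="\<lambda>y. l1 (T y) u + r2 (T y) u"]) (unfold lin_def h_def; simp add: basic fl algebra_simps)+
  have c4: "(\<Sum>i\<in>B. \<Sum>j\<in>B. R j u * (R i (l2 (T j) z) * g (T i))) = g (T (l2 (T u) z))"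
    by (rule dc3[where \<phi>="\<lambda>x. g (T x)" and Y="\<lambda>y. l2 (T y) z"]) (unfold lin_def g_def; simp add: basic fl algebra_simps)+
  have c3: "(\<Sum>i\<in>B. \<Sum>j\<in>B. R j z * (R i (r2 (T j) u) * g (T i))) = g (T (r2 (T z) u))"
    by (rule dc3[where \<phi>="\<lambda>x. g (T x)" and Y="\<lambda>y. r2 (T y) u"]) (unfold lin_def g_def; simp add: basic fl algebra_simps)+
  have c5: "(\<Sum>i\<in>B. \<Sum>j\<in>B. R i w * (R j (l1 (T i) z + l2 (T i) z) * - f (T j))) = - f (T (l1 (T w) z + l2 (T w) z))"
    by (rule dc2[where \<phi>="\<lambda>x. - f (T x)" and X="\<lambda>y. l1 (T y) z + l2 (T y) z"]) (unfold lin_def f_def; simp add: basic fl algebra_simps)+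
  have c8: "(\<Sum>i\<in>B. \<Sum>j\<in>B. R i u * (R j z * - g (p (T i) (T j)))) = - g (p (T u) (T z))"
    by (rule dc1[where \<Phi>="\<lambda>x y. - g (p (T x) (T y))"]) (unfold lin_def g_def; simp add: basic fl algebra_simps)+
  have c6: "(\<Sum>i\<in>B. \<Sum>j\<in>B. R i w * (R j u * h (s (T i) (T j) + p (T j) (T i)))) = h (s (T w) (T u) + p (T u) (T w))"
    by (rule dc1[where \<Phi>="\<lambda>x y. h (s (T x) (T y) + p (T y) (T x))"]) (unfold lin_def h_def; simp add: basic fl algebra_simps)+
  have c9: "(\<Sum>i\<in>B. \<Sum>j\<in>B. R i u * (R j (r1 (T i) w + l2 (T i) w) * - h (T j))) = - h (T (r1 (T u) w + l2 (T u) w))"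
    by (rule dc2[where \<phi>="\<lambda>x. - h (T x)" and X="\<lambda>y. r1 (T y) w + l2 (T y) w"]) (unfold lin_def h_def; simp add: basic fl algebra_simps)+
  let ?Y = "\<lambda>i j. F (hat_add (hs (sT_left sV B T i) (sT_left sV B T j)) (hp (sT_left sV B T i) (sT_left sV B T j))) * G (sT_right sV B T i) * H (sT_right sV B T j)
     + F (sT_left sV B T j) * G (sT_left sV B T i) * H (hat_add (hs (sT_right sV B T i) (sT_right sV B T j)) (hp (sT_right sV B T j) (sT_right sV B T i)))
     + F (sT_left sV B T i) * G (hp (sT_right sV B T i) (sT_left sV B T j)) * H (sT_right sV B T j)"
  have "?L = (\<Sum>i\<in>B. \<Sum>j\<in>B. (?Y (i,True) (j,True) + ?Y (i,True) (j,False)) + (?Y (i,False) (j,True) + ?Y (i,False) (j,False)))"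
    unfolding sum_BxU by (simp only: sum.distrib[symmetric])
  also have "\<dots> = (\<Sum>i\<in>B. \<Sum>j\<in>B.
      (R i w * (R j z * f (s (T i) (T j) + p (T i) (T j))) + R j z * (R i (r1 (T j) w + r2 (T j) w) * - f (T i)))
    + (R i w * (R j (l1 (T i) u + r2 (T i) u) * - h (T j)) + R j u * (R i (l2 (T j) z) * g (T i)))
    + (R j z * (R i (r2 (T j) u) * g (T i)) + R i w * (R j (l1 (T i) z + l2 (T i) z) * - f (T j)) + R i u * (R j z * - g (p (T i) (T j))))
    + (R i w * (R j u * h (s (T i) (T j) + p (T j) (T i))) + R i u * (R j (r1 (T i) w + l2 (T i) w) * - h (T j))))"
    apply (intro sum.cong refl)
    apply (simp only: summand[OF F G H] Let_def if_True if_False)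
    apply (simp only: f_def g_def h_def u_def w_def z_def add.assoc)
    done
  also have "\<dots> = ?R"
    unfolding sum.distrib c1 c2 c3 c4 c5 c6 c7 c8 c9
    unfolding f_def g_def h_def u_def w_def z_def Ds_def Dp_def
    by (simp add: fF_diff[OF F] fF_diff[OF G] fF_diff[OF H] fl T_add)
  finally show ?thesis .
qed


definition Sfun :: "'v \<Rightarrow> 'a \<times> ('v \<Rightarrow> 'k) \<Rightarrow> 'k" where "Sfun u0 X = snd X u0"
definition Gfun :: "('a \<Rightarrow> 'k) \<Rightarrow> 'a \<times> ('v \<Rightarrow> 'k) \<Rightarrow> 'k" where "Gfun g X = g (fst X)"

lemma hf_Sfun: "hat_functional sA sV (Sfun u0)"
  unfolding hat_functional_def Sfun_def by simp

lemma hf_Gfun: "Vector_Spaces.linear sA (*) g \<Longrightarrow> hat_functional sA sV (Gfun g)"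
  unfolding hat_functional_def Gfun_def Vector_Spaces.linear_iff by simp

lemma fF_Sfun[simp]: "fF (Sfun u0) x = 0" by (simp add: fF_def Sfun_def)
lemma uF_Sfun[simp]: "uF (Sfun u0) = u0"
  unfolding uF_def Sfun_def R_def dual_basis_vec_def
  by (simp, rule V.sum_representation_eq) (auto simp: V.independent_Basis V.span_Basis V.finite_Basis)
lemma fF_Gfun[simp]: "fF (Gfun g) x = g x" by (simp add: fF_def Gfun_def)
lemma uF_Gfun[simp]: "Vector_Spaces.linear sA (*) g \<Longrightarrow> uF (Gfun g) = 0"
proof -
  assume "Vector_Spaces.linear sA (*) g"
  then have "g (sA 0 0) = 0 * g 0" unfolding Vector_Spaces.linear_iff by blast
  then have "g 0 = 0" by simp
  then show ?thesis unfolding uF_def Gfun_def by simp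
qed

lemma sep:
  assumes "\<forall>g. Vector_Spaces.linear sA (*) g \<longrightarrow> g y = (0::'k)" shows "y = 0"
proof (rule ccontr)
  assume y: "y \<noteq> 0"
  interpret P: vector_space_pair sA "(*) :: 'k \<Rightarrow> 'k \<Rightarrow> 'k"
    using A.vector_space_axioms vs_k by (simp add: vector_space_pair_def)
  have "A.independent {y}" using y by simp
  from P.linear_independent_extend[OF this, of "\<lambda>_. 1"] obtain g where
    "Vector_Spaces.linear sA (*) g" "g y = 1" by auto
  then show False using assms by auto
qed

lemma main_ctx:
  "(\<forall>F G H. hat_functional sA sV F \<longrightarrow> hat_functional sA sV G \<longrightarrow> hat_functional sA sV H \<longrightarrow>
     fF F (Ds (uF G) (uF H) + Dp (uF G) (uF H)) - fF G (Dp (uF F) (uF H))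
     + fF H (Ds (uF G) (uF F) + Dp (uF F) (uF G)) = 0)
   \<longleftrightarrow> (\<forall>u v. Ds u v = 0 \<and> Dp u v = 0)"
proof
  assume h: "\<forall>F G H. hat_functional sA sV F \<longrightarrow> hat_functional sA sV G \<longrightarrow> hat_functional sA sV H \<longrightarrow>
     fF F (Ds (uF G) (uF H) + Dp (uF G) (uF H)) - fF G (Dp (uF F) (uF H))
     + fF H (Ds (uF G) (uF F) + Dp (uF F) (uF G)) = 0"
  have dp: "Dp u v = 0" for u v
  proof (rule sep, intro allI impI)
    fix g :: "'a \<Rightarrow> 'k" assume g: "Vector_Spaces.linear sA (*) g"
    show "g (Dp u v) = 0"
      using h[rule_format, OF hf_Sfun[of u] hf_Gfun[OF g] hf_Sfun[of v]] g by simp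
  qed
  have ds: "Ds u v = 0" for u v
  proof -
    have "Ds u v + Dp u v = 0"
    proof (rule sep, intro allI impI)
      fix g :: "'a \<Rightarrow> 'k" assume g: "Vector_Spaces.linear sA (*) g"
      show "g (Ds u v + Dp u v) = 0"
        using h[rule_format, OF hf_Gfun[OF g] hf_Sfun[of u] hf_Sfun[of v]] g by simp
    qed
    then show ?thesis using dp by simp
  qed
  show "\<forall>u v. Ds u v = 0 \<and> Dp u v = 0" using dp ds by blast
next
  assume "\<forall>u v. Ds u v = 0 \<and> Dp u v = 0"
  moreover have "fF K 0 = 0" if "hat_functional sA sV K" for K
    using fF_sc[OF that, of 0 0] by simp
  ultimately show "\<forall>F G H. hat_functional sA sV F \<longrightarrow> hat_functional sA sV G \<longrightarrow> hat_functional sA sV H \<longrightarrow>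
     fF F (Ds (uF G) (uF H) + Dp (uF G) (uF H)) - fF G (Dp (uF F) (uF H))
     + fF H (Ds (uF G) (uF F) + Dp (uF F) (uF G)) = 0" by simp
qed

lemma final:
  "hat_APN_YBE sA sV hs hp (B \<times> UNIV) (sT_left sV B T) (sT_right sV B T)
   \<longleftrightarrow> O_operator s p l1 r1 l2 r2 T"
proof -
  have "hat_APN_YBE sA sV hs hp (B \<times> UNIV) (sT_left sV B T) (sT_right sV B T) \<longleftrightarrow>
    (\<forall>u v. Ds u v = 0 \<and> Dp u v = 0)"
    unfolding hat_APN_YBE_def main_ctx[symmetric]
    by (simp add: total)
  also have "\<dots> \<longleftrightarrow> O_operator s p l1 r1 l2 r2 T"
    unfolding O_operator_def Ds_def Dp_def by auto
  finally show ?thesis .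
qed

end

lemma apn_ctxI:
  fixes sA :: "'k::field \<Rightarrow> 'a::ab_group_add \<Rightarrow> 'a"
    and s p :: "'a \<Rightarrow> 'a \<Rightarrow> 'a"
    and sV :: "'k \<Rightarrow> 'v::ab_group_add \<Rightarrow> 'v"
    and B :: "'v set"
    and l1 r1 l2 r2 :: "'a \<Rightarrow> 'v \<Rightarrow> 'v"
    and T :: "'v \<Rightarrow> 'a"
  assumes a1: "anti_pre_Novikov sA s p"
    and a2: "apN_rep sA s p sV B l1 r1 l2 r2"
    and a3: "Vector_Spaces.linear sV sA T"
  shows "apn_ctx sA sV B s p l1 r1 l2 r2 T"
proof -
  have h1: "vector_space sA" "bilin_op sA s" "bilin_op sA p"
    using a1 unfolding anti_pre_Novikov_def by blast+
  have h2: "finite_dimensional_vector_space sV B" "lin_rep_map sA sV l1" "lin_rep_map sA sV r1"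
    "lin_rep_map sA sV l2" "lin_rep_map sA sV r2"
    using a2 unfolding apN_rep_def by blast+
  show ?thesis
    unfolding apn_ctx_def apn_ctx_axioms_def
    using h1 h2 a3 unfolding bilin_op_def lin_rep_map_def Vector_Spaces.linear_iff
    by auto
qed

theorem mainTheorem8:
  fixes sA :: "'k::field \<Rightarrow> 'a::ab_group_add \<Rightarrow> 'a"
    and s p :: "'a \<Rightarrow> 'a \<Rightarrow> 'a"
    and sV :: "'k \<Rightarrow> 'v::ab_group_add \<Rightarrow> 'v"
    and B :: "'v set"
    and l1 r1 l2 r2 :: "'a \<Rightarrow> 'v \<Rightarrow> 'v"
    and T :: "'v \<Rightarrow> 'a"
  assumes "anti_pre_Novikov sA s p"
    and "apN_rep sA s p sV B l1 r1 l2 r2"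
    and "Vector_Spaces.linear sV sA T"
  shows "hat_APN_YBE sA sV (hat_succ s p l1 r1 l2 r2) (hat_prec s p l1 r1 l2 r2)
           (B \<times> UNIV) (sT_left sV B T) (sT_right sV B T)
         \<longleftrightarrow> O_operator s p l1 r1 l2 r2 T"
proof -
  interpret C: apn_ctx sA sV B s p l1 r1 l2 r2 T
    by (rule apn_ctxI[OF assms])
  show ?thesis by (rule C.final)
qed

end
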